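(* Let $\mathcal{A}$ be any (deterministic) online bin packing algorithm, let $F$ be a discrete probability distribution on $(0,1]$, and for a positive integer $n$ let $I_n(F)=(X_1,\ldots,X_n)$ be a list of $n$ i.i.d. samples from $F$. Then there exists a list $I$ of $n$ items such that $$\frac{\mathbb{E}[\mathcal{A}(I^\sigma)]}{\mathrm{OPT}(I)} \ge \frac{\mathbb{E}[\mathcal{A}(I_n(F))]}{\mathbb{E}[\mathrm{OPT}(I_n(F))]},$$ where $\sigma$ is uniform on $\mathcal{S}_n$. Moreover, if there is a constant $c>0$ such that $X_i\ge c$ almost surely for all $i\in[n]$, then $\mathrm{OPT}(I)\ge cn$.
   Context: Bin packing: items with sizes in $(0,1]$ are packed into unit-capacity bins (total size per bin at most $1$); $\mathrm{OPT}(I)$ is the minimum number of bins for list $I$, and $\mathcal{A}(I)$ the number of bins used by algorithm $\mathcal{A}$ when the items of $I$ arrive online in the given order. For $\sigma\in\mathcal{S}_n$ (permutations of $[n]$), $I^\sigma=(x_{\sigma(1)},\ldots,x_{\sigma(n)})$. *)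

theory Defs
  imports "HOL-Probability.Probability" "HOL-Combinatorics.Permutations"
begin

text \<open>A deterministic online bin packing algorithm: given the list of previously
arrived items and the current item, it returns the index of the bin into which
the current item is placed. Since it is deterministic, its earlier decisions are
determined by the earlier items.\<close>
type_synonym online_alg = "real list \<Rightarrow> real \<Rightarrow> nat"

definition online_assign :: "online_alg \<Rightarrow> real list \<Rightarrow> nat list" where
  "online_assign A xs = map (\<lambda>i. A (take i xs) (xs ! i)) [0..<length xs]"

definition feasible_packing :: "real list \<Rightarrow> (nat \<Rightarrow> nat) \<Rightarrow> bool" where
  "feasible_packing xs f \<longleftrightarrow>
     (\<forall>b. (\<Sum>i\<in>{i. i < length xs \<and> f i = b}. xs ! i) \<le> 1)"

definition valid_online_alg :: "online_alg \<Rightarrow> bool" where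
  "valid_online_alg A \<longleftrightarrow>
     (\<forall>xs. set xs \<subseteq> {0<..1} \<longrightarrow> feasible_packing xs (\<lambda>i. online_assign A xs ! i))"

definition alg_bins :: "online_alg \<Rightarrow> real list \<Rightarrow> nat" where
  "alg_bins A xs = card (set (online_assign A xs))"

definition OPT :: "real list \<Rightarrow> nat" where
  "OPT xs = (LEAST k. \<exists>f. (\<forall>i<length xs. f i < k) \<and> feasible_packing xs f)"

text \<open>The list I^sigma = (x_sigma(1), ..., x_sigma(n)), 0-indexed.\<close>
definition permute_list_by :: "(nat \<Rightarrow> nat) \<Rightarrow> real list \<Rightarrow> real list" where
  "permute_list_by \<sigma> xs = map (\<lambda>i. xs ! \<sigma> i) [0..<length xs]"

definition uniform_perm :: "nat \<Rightarrow> (nat \<Rightarrow> nat) pmf" where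
  "uniform_perm n = pmf_of_set {\<sigma>. \<sigma> permutes {..<n}}"

fun iid_list :: "'a pmf \<Rightarrow> nat \<Rightarrow> 'a list pmf" where
  "iid_list F 0 = return_pmf []"
| "iid_list F (Suc n) = bind_pmf F (\<lambda>x. map_pmf (Cons x) (iid_list F n))"

end

theory Submission imports Defs begin


lemma set_iid: "set_pmf (iid_list F n) \<subseteq> {xs. length xs = n \<and> set xs \<subseteq> set_pmf F}"
proof (induction n)
  case (Suc n)
  show ?case
  proof
    fix xs assume "xs \<in> set_pmf (iid_list F (Suc n))"
    then obtain x ys where "x \<in> set_pmf F" "ys \<in> set_pmf (iid_list F n)" "xs = x # ys" by auto
    then show "xs \<in> {xs. length xs = Suc n \<and> set xs \<subseteq> set_pmf F}" using Suc by auto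
  qed
qed simp

lemma pmf_iid: "pmf (iid_list F n) xs = (if length xs = n then prod_list (map (pmf F) xs) else 0)"
proof (induction n arbitrary: xs)
  case 0
  then show ?case by (cases xs) (auto simp: indicator_def)
next
  case (Suc n)
  show ?case
  proof (cases xs)
    case Nil
    have "xs \<notin> set_pmf (iid_list F (Suc n))" using set_iid[of F "Suc n"] Nil by auto
    then show ?thesis using Nil by (simp add: pmf_eq_0_set_pmf)
  next
    case (Cons y ys)
    have "\<And>x. pmf (map_pmf (Cons x) (iid_list F n)) (y # ys) = indicator {y} x * pmf (iid_list F n) ys"
    proof -
      fix x
      show "pmf (map_pmf (Cons x) (iid_list F n)) (y # ys) = indicator {y} x * pmf (iid_list F n) ys"
      proof (cases "x = y")
        case True
        then show ?thesis by (simp add: pmf_map_inj')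
      next
        case False
        then have "Cons x -` {y # ys} = {}" by auto
        then show ?thesis using False by (simp add: pmf_map)
      qed
    qed
    then have "pmf (iid_list F (Suc n)) xs = measure_pmf.expectation F (\<lambda>x. indicator {y} x * pmf (iid_list F n) ys)"
      by (simp add: pmf_bind Cons)
    also have "\<dots> = pmf F y * pmf (iid_list F n) ys"
      by (simp add: measure_pmf_single)
    finally show ?thesis using Suc[of ys] Cons by simp
  qed
qed

lemma perm_eq: "permute_list_by = permute_list"
  by (auto simp: fun_eq_iff permute_list_by_def permute_list_def)

lemma iid_perm:
  fixes F :: "'a pmf"
  assumes p: "\<sigma> permutes {..<n}"
  shows "map_pmf (permute_list \<sigma>) (iid_list F n) = iid_list F n"
proof (rule pmf_eqI)
  fix ys :: "'a list"
  let ?M = "iid_list F n"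
  show "pmf (map_pmf (permute_list \<sigma>) ?M) ys = pmf ?M ys"
  proof (cases "length ys = n")
    case True
    define xs where "xs = permute_list (inv \<sigma>) ys"
    have pi: "inv \<sigma> permutes {..<length ys}" using p True by (simp add: permutes_inv)
    have pxs: "\<sigma> permutes {..<length xs}" using p True by (simp add: xs_def)
    have lxs: "length xs = n" using True by (simp add: xs_def)
    have ys: "permute_list \<sigma> xs = ys"
      unfolding xs_def using permute_list_compose[OF p[folded True], of "inv \<sigma>", symmetric]
      by (simp add: permutes_inv_o(2)[OF p] True)
    have "permute_list \<sigma> -` {ys} \<inter> set_pmf ?M = {xs} \<inter> set_pmf ?M"
    proof (intro equalityI subsetI)
      fix zs assume zs: "zs \<in> permute_list \<sigma> -` {ys} \<inter> set_pmf ?M"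
      then have "zs \<in> set_pmf ?M" "permute_list \<sigma> zs = ys" by auto
      then have lz: "length zs = n" using set_iid by blast
      have pz: "inv \<sigma> permutes {..<length zs}" using lz p by (simp add: permutes_inv)
      have "permute_list (\<sigma> \<circ> inv \<sigma>) zs = permute_list (inv \<sigma>) (permute_list \<sigma> zs)"
        by (rule permute_list_compose[OF pz])
      then have "zs = xs" using \<open>permute_list \<sigma> zs = ys\<close> unfolding xs_def
        by (simp add: permutes_inv_o(1)[OF p])
      then show "zs \<in> {xs} \<inter> set_pmf ?M" using zs by auto
    qed (use ys in auto)
    then have "pmf (map_pmf (permute_list \<sigma>) ?M) ys = pmf ?M xs"
      by (metis measure_Int_set_pmf measure_pmf_single pmf_map)
    also have "\<dots> = pmf ?M ys"
    proof -
      have "mset (map (pmf F) ys) = mset (map (pmf F) xs)"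
        using ys mset_permute_list[OF pxs] by (metis mset_map)
      then have "prod_list (map (pmf F) ys) = prod_list (map (pmf F) xs)"
        by (metis prod_mset_prod_list)
      then show ?thesis using lxs True by (simp add: pmf_iid)
    qed
    finally show ?thesis .
  next
    case False
    have "permute_list \<sigma> -` {ys} \<inter> set_pmf ?M = {}"
      using set_iid False by fastforce
    then have "pmf (map_pmf (permute_list \<sigma>) ?M) ys = 0"
      by (metis measure_Int_set_pmf measure_empty pmf_map)
    then show ?thesis using False by (simp add: pmf_iid)
  qed
qed



lemma opt_props:
  assumes "set xs \<subseteq> {0<..1}"
  shows "sum_list xs \<le> real (OPT xs)" "OPT xs \<le> length xs"
proof -
  let ?P = "\<lambda>k. \<exists>f. (\<forall>i<length xs. f i < k) \<and> feasible_packing xs f"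
  have fid: "feasible_packing xs id"
    unfolding feasible_packing_def
  proof
    fix b
    have "{i. i < length xs \<and> id i = b} = (if b < length xs then {b} else {})" by auto
    moreover have "b < length xs \<Longrightarrow> xs ! b \<le> 1" using assms nth_mem by fastforce
    ultimately show "(\<Sum>i\<in>{i. i < length xs \<and> id i = b}. xs ! i) \<le> 1" by auto
  qed
  have ex: "?P (length xs)" using fid by (intro exI[of _ id]) simp
  then show "OPT xs \<le> length xs" unfolding OPT_def by (rule Least_le)
  have "?P (OPT xs)" unfolding OPT_def by (rule LeastI_ex) (use ex in blast)
  then obtain f where f: "\<forall>i<length xs. f i < OPT xs" "feasible_packing xs f" by blast
  have "sum_list xs = (\<Sum>i\<in>{..<length xs}. xs ! i)"
    by (simp add: sum_list_sum_nth atLeast0LessThan)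
  also have "\<dots> = (\<Sum>b\<in>{..<OPT xs}. \<Sum>i\<in>{x. x \<in> {..<length xs} \<and> f x = b}. xs ! i)"
    by (rule sum.group[symmetric]) (use f in auto)
  also have "\<dots> \<le> (\<Sum>b\<in>{..<OPT xs}. 1)"
  proof (rule sum_mono)
    fix b
    have "{x. x \<in> {..<length xs} \<and> f x = b} = {i. i < length xs \<and> f i = b}" by auto
    then show "(\<Sum>i\<in>{x. x \<in> {..<length xs} \<and> f x = b}. xs ! i) \<le> 1"
      using f(2) unfolding feasible_packing_def by simp
  qed
  finally show "sum_list xs \<le> real (OPT xs)" by simp
qed

lemma alg_le: "alg_bins A xs \<le> length xs"
  unfolding alg_bins_def online_assign_def
  by (metis card_length length_map length_upt minus_nat.diff_0)

lemma sum_pos: "set (xs::real list) \<subseteq> {0<..1} \<Longrightarrow> xs \<noteq> [] \<Longrightarrow> sum_list xs > 0"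
proof (induction xs)
  case (Cons a xs)
  have "0 < a" using Cons.prems by auto
  moreover have "0 \<le> sum_list xs"
  proof (rule sum_list_nonneg)
    fix x assume "x \<in> set xs" then show "0 \<le> x" using Cons.prems by auto
  qed
  ultimately show ?case by simp
qed simp



theorem lemma14:
  fixes A :: online_alg and F :: "real pmf" and n :: nat
  assumes "valid_online_alg A"
    and "set_pmf F \<subseteq> {0<..1}"
    and "n > 0"
  shows "\<exists>I. length I = n \<and> set I \<subseteq> {0<..1} \<and>
    measure_pmf.expectation (uniform_perm n) (\<lambda>\<sigma>. real (alg_bins A (permute_list_by \<sigma> I)))
      / real (OPT I)
    \<ge> measure_pmf.expectation (iid_list F n) (\<lambda>xs. real (alg_bins A xs))
      / measure_pmf.expectation (iid_list F n) (\<lambda>xs. real (OPT xs)) \<and>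
    (\<forall>c::real. c > 0 \<and> (AE x in measure_pmf F. c \<le> x) \<longrightarrow> c * real n \<le> real (OPT I))"
proof -
  define X where "X = iid_list F n"
  define P where "P = {\<sigma>. \<sigma> permutes {..<n}}"
  define a where "a = (\<lambda>xs. real (alg_bins A xs))"
  define ob where "ob = (\<lambda>xs. real (OPT xs))"
  define g where "g = (\<lambda>xs. measure_pmf.expectation (uniform_perm n) (\<lambda>\<sigma>. a (permute_list \<sigma> xs)))"
  define r where "r = measure_pmf.expectation X a / measure_pmf.expectation X ob"
  have finP: "finite P" unfolding P_def by (simp add: finite_permutations)
  have neP: "P \<noteq> {}" unfolding P_def using permutes_id by blast
  have supp: "length xs = n \<and> set xs \<subseteq> {0<..1}" if "xs \<in> set_pmf X" for xs
    using set_iid[of F n] that assms(2) unfolding X_def by blast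
  have g_eq: "g xs = (\<Sum>\<sigma>\<in>P. a (permute_list \<sigma> xs)) / card P" for xs
    unfolding g_def uniform_perm_def P_def[symmetric] using finP neP
    by (simp add: integral_pmf_of_set)
  have a_bd: "norm (a xs) \<le> real n" if "length xs = n" for xs
    using alg_le[of A xs] that by (simp add: a_def)
  have o_bd: "norm (ob xs) \<le> real n" if "length xs = n" "set xs \<subseteq> {0<..1}" for xs
    using opt_props(2)[of xs] that by (simp add: ob_def)
  have o_pos: "ob xs > 0" if "length xs = n" "set xs \<subseteq> {0<..1}" for xs
  proof -
    have "xs \<noteq> []" using that assms(3) by auto
    then have "sum_list xs > 0" using sum_pos that by blast
    then show ?thesis using opt_props(1)[of xs] that unfolding ob_def by linarith
  qed
  have intA: "integrable X a"
    by (rule measure_pmf.integrable_const_bound[where B="real n"])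
       (use a_bd supp in \<open>auto simp: AE_measure_pmf_iff\<close>)
  have intO: "integrable X ob"
    by (rule measure_pmf.integrable_const_bound[where B="real n"])
       (use o_bd supp in \<open>auto simp: AE_measure_pmf_iff\<close>)
  have intAp: "integrable X (\<lambda>xs. a (permute_list \<sigma> xs))" for \<sigma>
    by (rule measure_pmf.integrable_const_bound[where B="real n"])
       (use a_bd supp in \<open>auto simp: AE_measure_pmf_iff\<close>)
  have intG: "integrable X g"
    unfolding g_eq using intAp by auto
  have EAp: "measure_pmf.expectation X (\<lambda>xs. a (permute_list \<sigma> xs)) = measure_pmf.expectation X a"
    if "\<sigma> \<in> P" for \<sigma>
  proof -
    have "measure_pmf.expectation X (\<lambda>xs. a (permute_list \<sigma> xs))
        = measure_pmf.expectation (map_pmf (permute_list \<sigma>) X) a" by simp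
    also have "map_pmf (permute_list \<sigma>) X = X"
      unfolding X_def using iid_perm that unfolding P_def by blast
    finally show ?thesis .
  qed
  have EG: "measure_pmf.expectation X g = measure_pmf.expectation X a"
  proof -
    have "measure_pmf.expectation X g = (\<Sum>\<sigma>\<in>P. measure_pmf.expectation X (\<lambda>xs. a (permute_list \<sigma> xs))) / card P"
      unfolding g_eq using intAp by (simp add: Bochner_Integration.integral_sum)
    also have "\<dots> = (\<Sum>\<sigma>\<in>P. measure_pmf.expectation X a) / card P"
      using EAp by simp
    also have "\<dots> = measure_pmf.expectation X a" using finP neP by simp
    finally show ?thesis .
  qed
  have EO: "measure_pmf.expectation X ob > 0"
  proof -
    have "measure_pmf.expectation X (\<lambda>_. 0) < measure_pmf.expectation X ob"
      by (rule measure_pmf.integral_less_AE_space)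
         (use intO o_pos supp in \<open>auto simp: AE_measure_pmf_iff\<close>)
    then show ?thesis by simp
  qed
  have "\<exists>xs\<in>set_pmf X. r \<le> g xs / ob xs"
  proof (rule ccontr)
    assume "\<not> ?thesis"
    then have lt: "g xs < r * ob xs" if "xs \<in> set_pmf X" for xs
      using that o_pos supp by (auto simp: not_le pos_divide_less_eq)
    have "measure_pmf.expectation X g < measure_pmf.expectation X (\<lambda>xs. r * ob xs)"
      by (rule measure_pmf.integral_less_AE_space)
         (use intO intG lt in \<open>auto simp: AE_measure_pmf_iff\<close>)
    also have "\<dots> = measure_pmf.expectation X a"
      using EO unfolding r_def by simp
    finally show False using EG by simp
  qed
  then obtain I where I: "I \<in> set_pmf X" "r \<le> g I / ob I" by blast
  have cprop: "c * real n \<le> real (OPT I)" if "c > 0" "AE x in measure_pmf F. c \<le> x" for c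
  proof -
    have "\<forall>y\<in>set I. c \<le> y"
      using that(2) set_iid[of F n] I(1) unfolding X_def by (auto simp: AE_measure_pmf_iff)
    then have "(\<Sum>x\<leftarrow>I. c) \<le> (\<Sum>x\<leftarrow>I. x)" by (intro sum_list_mono) auto
    then have "c * real n \<le> sum_list I" using supp[OF I(1)] by (simp add: sum_list_triv mult.commute)
    then show ?thesis using opt_props(1)[of I] supp[OF I(1)] by linarith
  qed
  show ?thesis
    using I supp[OF I(1)] cprop
    unfolding perm_eq r_def g_def a_def ob_def X_def by blast
qed

end
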